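(* Let $N\ge2$, $p,q>0$ with $p+q=1$, and let $x_1\le\cdots\le x_N$ and $y_1\le\cdots\le y_N$ be integers. Let $\sigma\in\mathbb{S}_N$ and suppose that some entry $\beta$ appears in position $\beta-1$ of $\sigma$ (i.e. $\sigma(\beta-1)=\beta$) and all entries preceding $\beta$ are less than $\beta$. Then $I(\sigma)=0$, where $$I(\sigma)=\int_{\mathcal{C}_r}\cdots\int_{\mathcal{C}_r}A_\sigma\prod_{i=1}^N\xi_{\sigma(i)}^{\,x_i-y_{\sigma(i)}-1}\,d\xi_1\cdots d\xi_N$$ with $A_\sigma=\prod_{(\beta',\alpha')}S_{\beta'\alpha'}$ over all inversions $(\beta',\alpha')$ of $\sigma$, $S_{\beta'\alpha'}=-\frac{\xi_{\alpha'}}{\xi_{\beta'}}\cdot\frac{p+q\xi_{\alpha'}\xi_{\beta'}-\xi_{\beta'}}{p+q\xi_{\alpha'}\xi_{\beta'}-\xi_{\alpha'}}$ (the AZRP $S$-matrix), and $\mathcal{C}_r$ a circle centered at $0$ of sufficiently small radius $r$ that all poles of the integrand other than $0$ lie outside it.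
   Context: Permutations are in one-line notation $\sigma(1)\cdots\sigma(N)$; an inversion $(b,a)$ is a pair of entries with $b>a$ and $b$ to the left of $a$ in $\sigma$. Each $d\xi_j$ includes the factor $\frac{1}{2\pi i}$. *)

theory Defs
  imports "HOL-Complex_Analysis.Complex_Analysis"
begin

definition azrp_S :: "real \<Rightarrow> real \<Rightarrow> complex \<Rightarrow> complex \<Rightarrow> complex" where
  "azrp_S p q xb xa =
     - (xa / xb) * ((of_real p + of_real q * xa * xb - xb) / (of_real p + of_real q * xa * xb - xa))"

definition A_sigma :: "real \<Rightarrow> real \<Rightarrow> nat \<Rightarrow> (nat \<Rightarrow> nat) \<Rightarrow> (nat \<Rightarrow> complex) \<Rightarrow> complex" where
  "A_sigma p q N \<sigma> \<xi> =
     (\<Prod>(i, j) \<in> {(i, j). 1 \<le> i \<and> i < j \<and> j \<le> N \<and> \<sigma> i > \<sigma> j}.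
        azrp_S p q (\<xi> (\<sigma> i)) (\<xi> (\<sigma> j)))"

definition integrand :: "real \<Rightarrow> real \<Rightarrow> nat \<Rightarrow> (nat \<Rightarrow> int) \<Rightarrow> (nat \<Rightarrow> int) \<Rightarrow> (nat \<Rightarrow> nat)
    \<Rightarrow> (nat \<Rightarrow> complex) \<Rightarrow> complex" where
  "integrand p q N x y \<sigma> \<xi> =
     A_sigma p q N \<sigma> \<xi> * (\<Prod>i=1..N. \<xi> (\<sigma> i) powi (x i - y (\<sigma> i) - 1))"

text \<open>Iterated normalized contour integral over the circle of radius r about 0;
  the list gives the integration variables from outermost to innermost,
  each d xi including the factor 1/(2 pi i).\<close>
fun iter_cint :: "real \<Rightarrow> nat list \<Rightarrow> ((nat \<Rightarrow> complex) \<Rightarrow> complex) \<Rightarrow> (nat \<Rightarrow> complex) \<Rightarrow> complex" where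
  "iter_cint r [] F z = F z"
| "iter_cint r (j # js) F z =
     contour_integral (circlepath 0 r) (\<lambda>w. iter_cint r js F (z(j := w))) / (2 * pi * \<i>)"

definition I_sigma :: "real \<Rightarrow> real \<Rightarrow> nat \<Rightarrow> (nat \<Rightarrow> int) \<Rightarrow> (nat \<Rightarrow> int) \<Rightarrow> (nat \<Rightarrow> nat) \<Rightarrow> real \<Rightarrow> complex" where
  "I_sigma p q N x y \<sigma> r = iter_cint r (rev [1..<N+1]) (integrand p q N x y \<sigma>) (\<lambda>_. 0)"

end

theory Submission
  imports Defs
begin


definition Tor :: "real \<Rightarrow> nat set \<Rightarrow> (nat \<Rightarrow> complex) set" where
  "Tor r A = {\<xi>. \<forall>i\<in>A. cmod (\<xi> i) = r}"

lemma cint_div: "contour_integral g (\<lambda>x. f x / c) = contour_integral g f / c"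
proof (cases "c = 0")
  case True then show ?thesis by simp
next
  case False
  show ?thesis
  proof (cases "f contour_integrable_on g")
    case True then show ?thesis by (rule contour_integral_div)
  next
    case nf: False
    have "\<not> (\<lambda>x. f x / c) contour_integrable_on g"
    proof
      assume "(\<lambda>x. f x / c) contour_integrable_on g"
      then have "(\<lambda>x. f x / c * c) contour_integrable_on g"
        by (rule contour_integrable_rmul)
      then show False using nf False by simp
    qed
    then show ?thesis using nf by (simp add: not_integrable_contour_integral)
  qed
qed

lemma iter_div: "iter_cint r js (\<lambda>\<xi>. H \<xi> / c) z = iter_cint r js H z / c"
  by (induction js arbitrary: z) (simp_all add: cint_div)

lemma iter_append: "iter_cint r (xs @ ys) H z = iter_cint r xs (iter_cint r ys H) z"
  by (induction xs arbitrary: z) simp_all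

lemma iter_local:
  assumes "\<And>\<xi> v. H (\<xi>(k:=v)) = H \<xi>"
  shows "iter_cint r js H (z(k:=v)) = iter_cint r js H z"
proof (induction js arbitrary: z)
  case Nil then show ?case using assms by (simp only: iter_cint.simps)
next
  case (Cons j js)
  show ?case
  proof (cases "j = k")
    case True then show ?thesis by (simp only: iter_cint.simps fun_upd_upd)
  next
    case False
    then have "\<And>w. (z(k:=v))(j:=w) = (z(j:=w))(k:=v)" by (simp add: fun_upd_twist)
    then have "\<And>w. iter_cint r js H ((z(k:=v))(j:=w)) = iter_cint r js H (z(j:=w))"
      using Cons.IH by metis
    then show ?thesis by (simp only: iter_cint.simps)
  qed
qed

lemma iter_freeze:
  assumes "k \<notin> set js"
  shows "iter_cint r js (\<lambda>\<xi>. K (\<xi> k) \<xi>) z = iter_cint r js (K (z k)) z"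
  using assms by (induction js arbitrary: z) simp_all

lemma iter_comm:
  assumes "k \<notin> set js"
  shows "iter_cint r js (\<lambda>\<xi>. H (\<xi>(k := \<phi> (\<xi> k)))) z = iter_cint r js H (z(k := \<phi> (z k)))"
  using assms
proof (induction js arbitrary: z)
  case Nil then show ?case by simp
next
  case (Cons j js)
  then have jk: "j \<noteq> k" "k \<notin> set js" by auto
  have "\<And>w. (z(j:=w))(k := \<phi> ((z(j:=w)) k)) = (z(k := \<phi> (z k)))(j:=w)"
    using jk by (simp add: fun_upd_twist)
  then show ?case using Cons.IH[OF jk(2)] by (simp only: iter_cint.simps)
qed



lemma circ_rot_has:
  assumes c: "cmod c = 1" and f: "(f has_contour_integral i) (circlepath 0 r)"
  shows "((\<lambda>w. f (c * w)) has_contour_integral (i / c)) (circlepath 0 r)"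
proof -
  define a where "a = Arg2pi c / (2*pi)"
  have a01: "a \<in> {0..1}" using Arg2pi_ge_0[of c] Arg2pi_lt_2pi[of c]
    by (auto simp: a_def field_simps)
  have ce: "exp (2 * of_real pi * \<i> * of_real a) = c"
  proof -
    have e: "2 * of_real pi * \<i> * of_real a = \<i> * of_real (Arg2pi c)"
      by (simp add: a_def field_simps)
    have "c = exp (\<i> * of_real (Arg2pi c))" using Arg2pi_eq[of c] c by simp
    then show ?thesis by (subst e) simp
  qed
  have c0: "c \<noteq> 0" using c by auto
  have sh: "shiftpath a (circlepath 0 r) = (\<lambda>t. c * circlepath 0 r t)"
  proof
    fix t
    have e1: "exp (2 * of_real pi * \<i> * of_real (a + t)) = c * exp (2 * of_real pi * \<i> * of_real t)"
      by (simp add: ce[symmetric] distrib_left exp_add[symmetric] algebra_simps)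
    have e2: "exp (2 * of_real pi * \<i> * of_real (a + t - 1)) = exp (2 * of_real pi * \<i> * of_real (a + t))"
    proof -
      have "2 * of_real pi * \<i> * of_real (a + t - 1) = 2 * of_real pi * \<i> * of_real (a + t) - 2 * of_real pi * \<i>"
        by (simp add: algebra_simps)
      then show ?thesis by (simp add: exp_diff)
    qed
    show "shiftpath a (circlepath 0 r) t = c * circlepath 0 r t"
      unfolding shiftpath_def circlepath using e1 e2 by auto
  qed
  have "(f has_contour_integral i) (\<lambda>t. c * circlepath 0 r t)"
    using has_contour_integral_shiftpath[OF f valid_path_circlepath a01] sh by simp
  then have "((\<lambda>x. f (c * circlepath 0 r x) * vector_derivative (\<lambda>t. c * circlepath 0 r t) (at x)) has_integral i) {0..1}"
    by (simp add: has_contour_integral)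
  moreover have "\<And>x. vector_derivative (\<lambda>t. c * circlepath 0 r t) (at x) = c * vector_derivative (circlepath 0 r) (at x)"
    by (metis vector_derivative_at has_vector_derivative_mult_right has_vector_derivative_circlepath vector_derivative_circlepath)
  ultimately have "((\<lambda>x. f (c * circlepath 0 r x) * (c * vector_derivative (circlepath 0 r) (at x))) has_integral i) {0..1}"
    by simp
  then have "((\<lambda>x. f (c * circlepath 0 r x) * (c * vector_derivative (circlepath 0 r) (at x)) / c) has_integral i / c) {0..1}"
    by (rule has_integral_divide)
  then show ?thesis using c0 by (simp add: has_contour_integral)
qed

lemma circ_rot:
  assumes c: "cmod c = 1"
  shows "contour_integral (circlepath 0 r) (\<lambda>w. f (c * w)) = contour_integral (circlepath 0 r) f / c"
proof (cases "f contour_integrable_on (circlepath 0 r)")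
  case True
  then show ?thesis
    using circ_rot_has[OF c has_contour_integral_integral[OF True]] contour_integral_unique by blast
next
  case False
  have c0: "c \<noteq> 0" using c by auto
  have ci: "cmod (inverse c) = 1" using c by (simp add: norm_inverse)
  have "\<not> (\<lambda>w. f (c * w)) contour_integrable_on (circlepath 0 r)"
  proof
    assume "(\<lambda>w. f (c * w)) contour_integrable_on (circlepath 0 r)"
    then obtain j where "((\<lambda>w. f (c * w)) has_contour_integral j) (circlepath 0 r)"
      by (auto simp: contour_integrable_on_def)
    from circ_rot_has[OF ci this] have "((\<lambda>w. f w) has_contour_integral (j / inverse c)) (circlepath 0 r)"
      using c0 by (simp add: mult.assoc[symmetric])
    then show False using False by (auto simp: contour_integrable_on_def)
  qed
  then show ?thesis using False by (simp add: not_integrable_contour_integral)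
qed



lemma iter_rot:
  assumes "distinct js" "j \<in> set js" "cmod c = 1"
  shows "iter_cint r js (\<lambda>\<xi>. H (\<xi>(j := c * \<xi> j))) z = iter_cint r js H z / c"
  using assms(1,2)
proof (induction js arbitrary: z)
  case Nil then show ?case by simp
next
  case (Cons k js)
  show ?case
  proof (cases "k = j")
    case True
    then have jn: "j \<notin> set js" using Cons.prems by auto
    have "\<And>w. iter_cint r js (\<lambda>\<xi>. H (\<xi>(j := c * \<xi> j))) (z(j:=w)) = iter_cint r js H (z(j := c * w))"
      using iter_comm[OF jn, where H=H and \<phi>="\<lambda>v. c * v" and r=r] by simp
    then have "iter_cint r (k # js) (\<lambda>\<xi>. H (\<xi>(j := c * \<xi> j))) z
       = contour_integral (circlepath 0 r) (\<lambda>w. (\<lambda>w. iter_cint r js H (z(j := w))) (c * w)) / (2 * pi * \<i>)"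
      using True by simp
    also have "\<dots> = contour_integral (circlepath 0 r) (\<lambda>w. iter_cint r js H (z(j := w))) / c / (2 * pi * \<i>)"
      by (subst circ_rot[OF assms(3)]) (rule refl)
    also have "\<dots> = iter_cint r (k # js) H z / c" using True by simp
    finally show ?thesis .
  next
    case False
    then have "distinct js" "j \<in> set js" using Cons.prems by auto
    then show ?thesis using Cons.IH by (simp add: cint_div)
  qed
qed

lemma iter_zero:
  assumes "r > 0" "z \<in> Tor r B" "\<And>\<xi>. \<xi> \<in> Tor r (B \<union> set js) \<Longrightarrow> H \<xi> = 0"
  shows "iter_cint r js H z = 0"
  using assms(2,3)
proof (induction js arbitrary: B z)
  case Nil then show ?case by simp
next
  case (Cons j js)
  have "contour_integral (circlepath 0 r) (\<lambda>w. iter_cint r js H (z(j := w))) = 0"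
  proof (rule contour_integral_eq_0)
    fix w assume "w \<in> path_image (circlepath 0 r)"
    then have w: "cmod w = r" using assms(1) by simp
    show "iter_cint r js H (z(j := w)) = 0"
    proof (rule Cons.IH[where B="insert j B"])
      show "z(j := w) \<in> Tor r (insert j B)" using Cons.prems(1) w by (auto simp: Tor_def)
      show "\<And>\<xi>. \<xi> \<in> Tor r (insert j B \<union> set js) \<Longrightarrow> H \<xi> = 0"
        using Cons.prems(2) by simp
    qed
  qed
  then show ?case by simp
qed

lemma cont_vd: "continuous_on S (\<lambda>t. vector_derivative (circlepath 0 r) (at t))"
  unfolding vector_derivative_circlepath by (intro continuous_intros)

lemma cont_upd:
  assumes "continuous_on S f" "continuous_on S g"
  shows "continuous_on S (\<lambda>p. (f p :: nat \<Rightarrow> complex)(j := g p))"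
proof (rule continuous_on_coordinatewise_then_product)
  fix i
  show "continuous_on S (\<lambda>p. ((f p)(j := g p)) i)"
  proof (cases "i = j")
    case True then show ?thesis using assms by simp
  next
    case False
    have "continuous_on S (\<lambda>p. f p i)"
      using continuous_on_product_then_coordinatewise[OF assms(1)] by simp
    then show ?thesis using False by simp
  qed
qed

lemma iter_cont:
  assumes "r > 0" "continuous_on (Tor r A) H"
  shows "continuous_on (Tor r (A - set js)) (iter_cint r js H)"
proof (induction js)
  case Nil then show ?case using assms(2) by simp
next
  case (Cons j js)
  let ?g = "circlepath 0 r"
  have eq: "iter_cint r (j # js) H = (\<lambda>z. integral (cbox 0 1) (\<lambda>t. iter_cint r js H (z(j := ?g t)) * vector_derivative ?g (at t)) / (2 * pi * \<i>))"
    by (simp add: contour_integral_integral fun_eq_iff)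
  define \<Phi> where "\<Phi> = (\<lambda>p. (fst p)(j := ?g (snd p)))"
  have c1: "continuous_on (Tor r (A - set (j # js)) \<times> cbox 0 1) \<Phi>"
    unfolding \<Phi>_def
    by (intro cont_upd continuous_intros continuous_on_compose2[OF path_circlepath[unfolded path_def]]) auto
  have im: "\<Phi> ` (Tor r (A - set (j # js)) \<times> cbox 0 1) \<subseteq> Tor r (A - set js)"
    using assms(1) by (auto simp: \<Phi>_def Tor_def norm_mult circlepath)
  have c2: "continuous_on (Tor r (A - set (j # js)) \<times> cbox 0 1) (\<lambda>p. iter_cint r js H (\<Phi> p))"
    by (rule continuous_on_compose2[OF Cons c1 im])
  have c3: "continuous_on (Tor r (A - set (j # js)) \<times> cbox 0 1) (\<lambda>(z, t). iter_cint r js H (z(j := ?g t)) * vector_derivative ?g (at t))"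
    using c2 unfolding split_def \<Phi>_def vector_derivative_circlepath
    by (intro continuous_intros) auto
  show ?case unfolding eq
    by (intro continuous_on_divide continuous_on_const integral_continuous_on_param c3) auto
qed



lemma iter_move:
  assumes r: "r > 0" and dj: "distinct (j # js)" and H: "continuous_on (Tor r A) H"
    and z: "z \<in> Tor r (A - set (j # js))"
  shows "iter_cint r (j # js) H z = iter_cint r (js @ [j]) H z"
  using dj z
proof (induction js arbitrary: z)
  case Nil then show ?case by simp
next
  case (Cons k js)
  let ?g = "circlepath 0 r"
  define f where "f = (\<lambda>w1 w2. iter_cint r js H ((z(j := w1))(k := w2)) / (2 * pi * \<i>))"
  have jk: "j \<noteq> k" using Cons.prems by auto
  have cont: "continuous_on (Tor r (A - set js)) (iter_cint r js H)"
    by (rule iter_cont[OF r H])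
  have fc: "continuous_on (path_image ?g \<times> path_image ?g) (\<lambda>(y1, y2). f y1 y2)"
  proof -
    define \<Phi> where "\<Phi> = (\<lambda>p::complex\<times>complex. (z(j := fst p))(k := snd p))"
    have c1: "continuous_on (path_image ?g \<times> path_image ?g) \<Phi>"
      unfolding \<Phi>_def by (intro cont_upd continuous_intros)
    have im: "\<Phi> ` (path_image ?g \<times> path_image ?g) \<subseteq> Tor r (A - set js)"
      using r Cons.prems(2) by (auto simp: \<Phi>_def Tor_def)
    have "continuous_on (path_image ?g \<times> path_image ?g) (\<lambda>p. iter_cint r js H (\<Phi> p))"
      by (rule continuous_on_compose2[OF cont c1 im])
    then show ?thesis unfolding f_def \<Phi>_def split_def
      by (intro continuous_intros) auto
  qed
  have "iter_cint r (j # k # js) H z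
      = contour_integral ?g (\<lambda>w1. contour_integral ?g (f w1)) / (2 * pi * \<i>)"
    by (simp add: f_def cint_div)
  also have "\<dots> = contour_integral ?g (\<lambda>w2. contour_integral ?g (\<lambda>w1. f w1 w2)) / (2 * pi * \<i>)"
    by (subst contour_integral_swap[OF fc]) (auto intro: cont_vd)
  also have "\<dots> = contour_integral ?g (\<lambda>w2. iter_cint r (j # js) H (z(k := w2))) / (2 * pi * \<i>)"
  proof -
    have "\<And>w1 w2. (z(j := w1))(k := w2) = (z(k := w2))(j := w1)" using jk by (simp add: fun_upd_twist)
    then show ?thesis by (simp add: f_def cint_div)
  qed
  also have "\<dots> = contour_integral ?g (\<lambda>w2. iter_cint r (js @ [j]) H (z(k := w2))) / (2 * pi * \<i>)"
  proof -
    have "contour_integral ?g (\<lambda>w2. iter_cint r (j # js) H (z(k := w2))) = contour_integral ?g (\<lambda>w2. iter_cint r (js @ [j]) H (z(k := w2)))"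
    proof (rule contour_integral_eq)
      fix w assume "w \<in> path_image ?g"
      then have w: "cmod w = r" using r by simp
      show "iter_cint r (j # js) H (z(k := w)) = iter_cint r (js @ [j]) H (z(k := w))"
        apply (rule Cons.IH)
        using Cons.prems w by (auto simp: Tor_def)
    qed
    then show ?thesis by simp
  qed
  also have "\<dots> = iter_cint r ((k # js) @ [j]) H z" by simp
  finally show ?case .
qed



lemma cont_coord: "continuous_on S (\<lambda>\<xi>::nat\<Rightarrow>complex. \<xi> i)"
  by (rule continuous_on_subset[OF continuous_on_product_coordinates]) auto

lemma iter_rot2:
  assumes "distinct js" "\<alpha> \<in> set js" "\<beta> \<in> set js" "\<alpha> \<noteq> \<beta>" "cmod c = 1"
  shows "iter_cint r js (\<lambda>\<xi>. F (\<xi>(\<alpha> := c * \<xi> \<alpha>, \<beta> := \<xi> \<beta> / c))) z = iter_cint r js F z"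
proof -
  have c0: "c \<noteq> 0" using assms(5) by auto
  have ci: "cmod (inverse c) = 1" using assms(5) by (simp add: norm_inverse)
  define H1 where "H1 = (\<lambda>\<xi>. F (\<xi>(\<alpha> := c * \<xi> \<alpha>)))"
  have eq: "(\<lambda>\<xi>. F (\<xi>(\<alpha> := c * \<xi> \<alpha>, \<beta> := \<xi> \<beta> / c))) = (\<lambda>\<xi>. H1 (\<xi>(\<beta> := inverse c * \<xi> \<beta>)))"
  proof
    fix \<xi>
    have "\<xi>(\<alpha> := c * \<xi> \<alpha>, \<beta> := \<xi> \<beta> / c) = (\<xi>(\<beta> := inverse c * \<xi> \<beta>))(\<alpha> := c * (\<xi>(\<beta> := inverse c * \<xi> \<beta>)) \<alpha>)"
      using assms(4) by (simp add: fun_upd_twist field_simps)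
    then show "F (\<xi>(\<alpha> := c * \<xi> \<alpha>, \<beta> := \<xi> \<beta> / c)) = H1 (\<xi>(\<beta> := inverse c * \<xi> \<beta>))"
      by (simp add: H1_def)
  qed
  have "iter_cint r js (\<lambda>\<xi>. H1 (\<xi>(\<beta> := inverse c * \<xi> \<beta>))) z = iter_cint r js H1 z / inverse c"
    by (rule iter_rot[OF assms(1,3) ci])
  moreover have "iter_cint r js H1 z = iter_cint r js F z / c"
    unfolding H1_def by (rule iter_rot[OF assms(1,2,5)])
  ultimately show ?thesis
    unfolding eq using c0 by simp
qed

lemma main_abstract:
  assumes r: "r > 0" and dj: "distinct js" and nz: "0 \<notin> set js"
    and ab: "\<alpha> \<in> set js" "\<beta> \<in> set js" "\<alpha> \<noteq> \<beta>"
    and L: "\<And>\<xi> v. F (\<xi>(0 := v)) = F \<xi>"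
    and C: "continuous_on (Tor r (set js)) F"
    and K: "\<And>\<xi>. \<xi> \<in> Tor r (set js) \<Longrightarrow>
       contour_integral (circlepath 0 r) (\<lambda>w. F (\<xi>(\<alpha> := (w / r) * \<xi> \<alpha>, \<beta> := \<xi> \<beta> / (w / r))) / w) = 0"
  shows "iter_cint r js F z = 0"
proof -
  let ?g = "circlepath 0 r"
  define S where "S = set js"
  have a0: "\<alpha> \<noteq> 0" "\<beta> \<noteq> 0" using ab nz by metis+
  define K' where "K' = (\<lambda>(v::complex) \<xi>. F (\<xi>(\<alpha> := (v / r) * \<xi> \<alpha>, \<beta> := \<xi> \<beta> / (v / r))) / v)"
  define G where "G = (\<lambda>\<xi>. K' (\<xi> 0) \<xi>)"
  define I where "I = iter_cint r js F z"
  have step1: "iter_cint r js G (z(0 := w)) = I / w" if w: "cmod w = r" for w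
  proof -
    have "iter_cint r js G (z(0 := w)) = iter_cint r js (K' w) (z(0 := w))"
      unfolding G_def using iter_freeze[OF nz, of r K' "z(0:=w)"] by simp
    also have "\<dots> = iter_cint r js (\<lambda>\<xi>. F (\<xi>(\<alpha> := (w / r) * \<xi> \<alpha>, \<beta> := \<xi> \<beta> / (w / r)))) (z(0 := w)) / w"
      unfolding K'_def by (rule iter_div)
    also have "\<dots> = iter_cint r js F (z(0 := w)) / w"
      using iter_rot2[OF dj ab, of "w / r"] w r by (simp add: norm_divide)
    also have "\<dots> = I / w" unfolding I_def using iter_local[of F 0] L by metis
    finally show ?thesis .
  qed
  have "iter_cint r (0 # js) G z = contour_integral ?g (\<lambda>w. I / w) / (2 * pi * \<i>)"
  proof -
    have "contour_integral ?g (\<lambda>w. iter_cint r js G (z(0 := w))) = contour_integral ?g (\<lambda>w. I / w)"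
      by (rule contour_integral_eq) (use r step1 in auto)
    then show ?thesis by simp
  qed
  also have "\<dots> = I"
  proof -
    have "((\<lambda>u. (\<lambda>_. I) u / (u - 0)) has_contour_integral (2 * of_real pi * \<i> * (\<lambda>_. I) 0)) ?g"
      by (rule Cauchy_integral_circlepath_simple) (use r in auto)
    then show ?thesis by (simp add: contour_integral_unique)
  qed
  finally have e1: "iter_cint r (0 # js) G z = I" .
  have GC: "continuous_on (Tor r (insert 0 S)) G"
  proof -
    define \<Psi> where "\<Psi> = (\<lambda>\<xi>::nat\<Rightarrow>complex. \<xi>(\<alpha> := (\<xi> 0 / r) * \<xi> \<alpha>, \<beta> := \<xi> \<beta> / (\<xi> 0 / r)))"
    have n0: "\<And>\<xi>. \<xi> \<in> Tor r (insert 0 S) \<Longrightarrow> \<xi> 0 \<noteq> 0" using r by (auto simp: Tor_def)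
    have c1: "continuous_on (Tor r (insert 0 S)) \<Psi>"
      unfolding \<Psi>_def
      by (intro cont_upd continuous_intros cont_coord)
         (use n0 r in auto)
    have im: "\<Psi> ` Tor r (insert 0 S) \<subseteq> Tor r S"
      using r by (auto simp: \<Psi>_def Tor_def norm_mult norm_divide)
    have "continuous_on (Tor r (insert 0 S)) (\<lambda>\<xi>. F (\<Psi> \<xi>))"
      using continuous_on_compose2[OF C[folded S_def] c1 im] .
    then show ?thesis unfolding G_def K'_def \<Psi>_def
      by (intro continuous_intros cont_coord)
         (use n0 in auto)
  qed
  have "iter_cint r (0 # js) G z = iter_cint r (js @ [0]) G z"
    by (rule iter_move[OF r _ GC]) (use dj nz in \<open>auto simp: S_def Tor_def\<close>)
  also have "\<dots> = iter_cint r js (iter_cint r [0] G) z" by (rule iter_append)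
  also have "\<dots> = 0"
  proof (rule iter_zero[OF r, where B="{}"])
    show "z \<in> Tor r {}" by (simp add: Tor_def)
    fix \<xi> assume \<xi>: "\<xi> \<in> Tor r ({} \<union> set js)"
    have "\<And>w. G (\<xi>(0 := w)) = F (\<xi>(\<alpha> := (w / r) * \<xi> \<alpha>, \<beta> := \<xi> \<beta> / (w / r))) / w"
    proof -
      fix w
      have "(\<xi>(0 := w))(\<alpha> := (w / r) * \<xi> \<alpha>, \<beta> := \<xi> \<beta> / (w / r))
           = (\<xi>(\<alpha> := (w / r) * \<xi> \<alpha>, \<beta> := \<xi> \<beta> / (w / r)))(0 := w)"
        using a0 by (simp add: fun_upd_twist)
      then show "G (\<xi>(0 := w)) = F (\<xi>(\<alpha> := (w / r) * \<xi> \<alpha>, \<beta> := \<xi> \<beta> / (w / r))) / w"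
        unfolding G_def K'_def using a0 L by simp
    qed
    then show "iter_cint r [0] G \<xi> = 0" using K[of \<xi>] \<xi> by simp
  qed
  finally show ?thesis using e1 I_def by simp
qed



definition good :: "real \<Rightarrow> int \<Rightarrow> (complex \<Rightarrow> complex) \<Rightarrow> bool" where
  "good r k f \<longleftrightarrow> (\<exists>h. h holomorphic_on ball 0 (2*r) \<and> (\<forall>w. cmod w = r \<longrightarrow> f w = w powi k * h w))"

lemma good_mult:
  assumes "r > 0" "good r k f" "good r l g"
  shows "good r (k + l) (\<lambda>w. f w * g w)"
proof -
  obtain h1 where h1: "h1 holomorphic_on ball 0 (2*r)" "\<forall>w. cmod w = r \<longrightarrow> f w = w powi k * h1 w"
    using assms(2) by (auto simp: good_def)
  obtain h2 where h2: "h2 holomorphic_on ball 0 (2*r)" "\<forall>w. cmod w = r \<longrightarrow> g w = w powi l * h2 w"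
    using assms(3) by (auto simp: good_def)
  show ?thesis unfolding good_def
  proof (intro exI conjI allI impI)
    show "(\<lambda>w. h1 w * h2 w) holomorphic_on ball 0 (2*r)" using h1 h2 by (intro holomorphic_intros)
    fix w :: complex assume w: "cmod w = r"
    then have "w \<noteq> 0" using assms(1) by auto
    then show "f w * g w = w powi (k + l) * (h1 w * h2 w)"
      using h1 h2 w by (simp add: power_int_add)
  qed
qed

lemma good_const: "good r 0 (\<lambda>w. c)"
  unfolding good_def by (rule exI[of _ "\<lambda>w. c"]) auto

lemma good_cong:
  assumes "good r k f" "\<And>w. cmod w = r \<Longrightarrow> f w = g w"
  shows "good r k g"
  using assms unfolding good_def by metis

lemma good_prod:
  assumes "r > 0" "finite S" "\<And>i. i \<in> S \<Longrightarrow> good r (k i) (f i)"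
  shows "good r (\<Sum>i\<in>S. k i) (\<lambda>w. \<Prod>i\<in>S. f i w)"
  using assms(2,3)
proof (induction S rule: finite_induct)
  case empty then show ?case using good_const[of r 1] by simp
next
  case (insert i S)
  then have "good r (k i + (\<Sum>i\<in>S. k i)) (\<lambda>w. f i w * (\<Prod>i\<in>S. f i w))"
    by (intro good_mult assms(1)) auto
  then show ?case using insert by simp
qed

lemma good_mono:
  assumes "good r k f" "l \<le> k" "r > 0"
  shows "good r l f"
proof -
  obtain h where h: "h holomorphic_on ball 0 (2*r)" "\<forall>w. cmod w = r \<longrightarrow> f w = w powi k * h w"
    using assms(1) by (auto simp: good_def)
  show ?thesis unfolding good_def
  proof (intro exI conjI allI impI)
    show "(\<lambda>w. w ^ nat (k - l) * h w) holomorphic_on ball 0 (2*r)" using h by (intro holomorphic_intros)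
    fix w :: complex assume w: "cmod w = r"
    have "w powi k = w powi (l + (k - l))" by simp
    also have "\<dots> = w powi l * w powi (k - l)"
      by (rule power_int_add) (use assms(2,3) w in auto)
    also have "w powi (k - l) = w ^ nat (k - l)"
      using assms(2) by (simp add: power_int_def)
    finally show "f w = w powi l * (w ^ nat (k - l) * h w)" using h w by simp
  qed
qed

lemma good_final:
  assumes "r > 0" "good r 1 f"
  shows "contour_integral (circlepath 0 r) (\<lambda>w. f w / w) = 0"
proof -
  obtain h where h: "h holomorphic_on ball 0 (2*r)" "\<forall>w. cmod w = r \<longrightarrow> f w = w powi 1 * h w"
    using assms(2) by (auto simp: good_def)
  have "contour_integral (circlepath 0 r) (\<lambda>w. f w / w) = contour_integral (circlepath 0 r) h"
  proof (rule contour_integral_eq)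
    fix w assume "w \<in> path_image (circlepath 0 r)"
    then have w: "cmod w = r" using assms(1) by simp
    then have "w \<noteq> 0" using assms(1) by auto
    then show "f w / w = h w" using h w by simp
  qed
  also have "\<dots> = 0"
    by (rule contour_integral_unique[OF Cauchy_theorem_disc_simple[OF h(1)]]) (use assms(1) in auto)
  finally show ?thesis .
qed



lemma nz_add: "norm (X::complex) < p \<Longrightarrow> of_real p + X \<noteq> 0"
proof
  assume "norm X < p" "of_real p + X = 0"
  then have "X = - of_real p" by (simp add: add_eq_0_iff)
  then show False using \<open>norm X < p\<close> by simp
qed

locale prm =
  fixes p q r :: real
  assumes p: "p > 0" and q: "q > 0" and pq: "p + q = 1" and r: "r > 0" and rp: "5 * r < p"
begin

lemma r1: "r < 1" using p q pq rp by linarith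
lemma qr: "q * r * r \<le> r"
proof -
  have "q * r \<le> 1 * 1" using q r r1 pq p by (intro mult_mono) auto
  then show ?thesis using r mult_right_mono[of "q*r" 1 r] by simp
qed

lemma g1:
  assumes a: "cmod a = r" and b: "cmod b = r"
  shows "good r 1 (\<lambda>w. azrp_S p q (b / (w / r)) ((w / r) * a))"
  unfolding good_def
proof (intro exI conjI allI impI)
  have b0: "b \<noteq> 0" using b r by auto
  have den: "of_real p + (q * a * b - (w / r) * a) \<noteq> 0" if "cmod w < 2 * r" for w :: complex
  proof (rule nz_add)
    have "norm (q * a * b - (w / r) * a) \<le> norm (q * a * b) + norm ((w / r) * a)" by (rule norm_triangle_ineq4)
    also have "\<dots> = q * r * r + cmod w" using a b r q by (simp add: norm_mult norm_divide)
    also have "\<dots> < q * r * r + 2 * r" using that by simp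
    also have "\<dots> \<le> 3 * r" using qr by simp
    also have "\<dots> < p" using rp r by simp
    finally show "norm (q * a * b - (w / r) * a) < p" .
  qed
  show "(\<lambda>w. -(a / (b * r)) * ((p * (w / r) + q * a * b * (w / r) - b) / (of_real p + (q * a * b - (w / r) * a))))
      holomorphic_on ball 0 (2 * r)"
    using den by (intro holomorphic_intros) auto
  fix w :: complex assume w: "cmod w = r"
  have u0: "w / r \<noteq> 0" using w r by auto
  have d: "of_real p + (q * a * b - (w / r) * a) \<noteq> 0" using den w r by simp
  define u where "u = w / r"
  have u0': "u \<noteq> 0" using u0 u_def by simp
  have d': "of_real p + of_real q * (u * a) * (b / u) - u * a \<noteq> 0"
    using d u0' by (simp add: u_def field_simps)
  have e1: "of_real q * (u * a) * (b / u) = q * a * b" using u0' by (simp add: field_simps)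
  have e2: "of_real p + q * a * b - b / u = (p * u + q * a * b * u - b) / u" using u0' by (simp add: field_simps)
  have e3: "(u * a) / (b / u) = u * u * a / b" using u0' by (simp add: field_simps)
  have e4: "of_real p + q * a * b - u * a = of_real p + (q * a * b - u * a)" by simp
  have gen: "\<And>N D. -(u * u * a / b) * ((N / u) / D) = u * (-(a / b) * (N / D))"
    using u0' by (simp add: field_simps)
  have "azrp_S p q (b / u) (u * a) = u * (-(a / b) * ((p * u + q * a * b * u - b) / (of_real p + (q * a * b - u * a))))"
    unfolding azrp_S_def e1 e2 e3 e4 gen ..
  also have "\<dots> = w powi 1 * (-(a / (b * r)) * ((p * (w / r) + q * a * b * (w / r) - b) / (of_real p + (q * a * b - (w / r) * a))))"
    using r by (simp add: u_def field_simps)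
  finally show "azrp_S p q (b / (w / r)) ((w / r) * a) = w powi 1 * (-(a / (b * r)) * ((p * (w / r) + q * a * b * (w / r) - b) / (of_real p + (q * a * b - (w / r) * a))))"
    by (simp add: u_def)
qed

lemma g2:
  assumes a: "cmod a = r" and d: "cmod d = r"
  shows "good r 1 (\<lambda>w. azrp_S p q d ((w / r) * a))"
  unfolding good_def
proof (intro exI conjI allI impI)
  have d0: "d \<noteq> 0" using d r by auto
  have den: "of_real p + (q * ((w / r) * a) * d - (w / r) * a) \<noteq> 0" if "cmod w < 2 * r" for w :: complex
  proof (rule nz_add)
    have "norm (q * ((w / r) * a) * d - (w / r) * a) \<le> norm (q * ((w / r) * a) * d) + norm ((w / r) * a)" by (rule norm_triangle_ineq4)
    also have "\<dots> = q * (cmod w / r * r) * r + cmod w / r * r" using a d r q by (simp add: norm_mult norm_divide)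
    also have "\<dots> = q * cmod w * r + cmod w" using r by simp
    also have "\<dots> \<le> 1 * cmod w * 1 + cmod w" using q pq p r1 r by (intro add_mono mult_mono) auto
    also have "\<dots> < 4 * r" using that by simp
    also have "\<dots> < p" using rp r by simp
    finally show "norm (q * ((w / r) * a) * d - (w / r) * a) < p" .
  qed
  show "(\<lambda>w. -((a / r) / d) * ((of_real p + q * ((w / r) * a) * d - d) / (of_real p + (q * ((w / r) * a) * d - (w / r) * a))))
      holomorphic_on ball 0 (2 * r)"
    using den by (intro holomorphic_intros) auto
  fix w :: complex assume w: "cmod w = r"
  have e: "(w / r) * a / d = w * ((a / r) / d)" by simp
  show "azrp_S p q d ((w / r) * a) = w powi 1 * (-((a / r) / d) * ((of_real p + q * ((w / r) * a) * d - d) / (of_real p + (q * ((w / r) * a) * d - (w / r) * a))))"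
    unfolding azrp_S_def by (simp add: e diff_diff_eq2 add_diff_eq)
qed

lemma g3: "good r e (\<lambda>w. ((w / r) * a) powi e)"
  unfolding good_def
proof (intro exI conjI allI impI)
  show "(\<lambda>w. (a / r) powi e) holomorphic_on ball 0 (2 * r)" by (intro holomorphic_intros)
  fix w :: complex
  have "(w / r) * a = w * (a / r)" by simp
  then show "((w / r) * a) powi e = w powi e * (a / r) powi e" by (simp only: power_int_mult_distrib)
qed

lemma g4: "good r (- e) (\<lambda>w. (b / (w / r)) powi e)"
  unfolding good_def
proof (intro exI conjI allI impI)
  show "(\<lambda>w. (b * r) powi e) holomorphic_on ball 0 (2 * r)" by (intro holomorphic_intros)
  fix w :: complex
  have "b / (w / r) = (b * r) / w" by simp
  then show "(b / (w / r)) powi e = w powi (- e) * (b * r) powi e"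
    by (simp add: power_int_divide_distrib power_int_minus field_simps)
qed

lemma S_den_nz:
  assumes "cmod xa = r" "cmod xb = r"
  shows "of_real p + of_real q * xa * xb - xa \<noteq> 0"
proof -
  have "norm (of_real q * xa * xb - xa) \<le> norm (of_real q * xa * xb) + norm xa" by (rule norm_triangle_ineq4)
  also have "\<dots> = q * r * r + r" using assms q by (simp add: norm_mult)
  also have "\<dots> < p" using qr rp r by linarith
  finally show ?thesis using nz_add[of "of_real q * xa * xb - xa" p] by (simp add: add_diff_eq)
qed

lemma cont_S:
  assumes "u \<in> A" "v \<in> A"
  shows "continuous_on (Tor r A) (\<lambda>\<xi>. azrp_S p q (\<xi> u) (\<xi> v))"
proof -
  have n: "\<xi> u \<noteq> 0" "of_real p + of_real q * \<xi> v * \<xi> u - \<xi> v \<noteq> 0" if "\<xi> \<in> Tor r A" for \<xi>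
    using that assms r S_den_nz[of "\<xi> v" "\<xi> u"] by (auto simp: Tor_def)
  show ?thesis unfolding azrp_S_def
    by (intro continuous_intros cont_coord) (use n in auto)
qed

end


lemma combi:
  fixes \<sigma> :: "nat \<Rightarrow> nat"
  assumes perm: "\<sigma> permutes {1..N}" and b: "2 \<le> \<beta>" "\<beta> \<le> N" "\<sigma> (\<beta> - 1) = \<beta>"
    and pre: "\<forall>i. 1 \<le> i \<and> i < \<beta> - 1 \<longrightarrow> \<sigma> i < \<beta>"
  obtains \<alpha> i\<alpha> where "1 \<le> \<alpha>" "\<alpha> < \<beta>" "i\<alpha> \<in> {1..N}" "\<sigma> i\<alpha> = \<alpha>" "\<beta> \<le> i\<alpha>"
    "\<And>j. j \<in> {1..N} \<Longrightarrow> \<beta> \<le> j \<Longrightarrow> \<sigma> j < \<beta> \<Longrightarrow> \<sigma> j = \<alpha>"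
proof -
  have inj: "inj \<sigma>" using permutes_inj[OF perm] .
  have img: "\<And>i. \<sigma> i \<in> {1..N} \<longleftrightarrow> i \<in> {1..N}" using permutes_in_image[OF perm] .
  define D where "D = {1..\<beta>-1} - \<sigma> ` {1..\<beta>-2}"
  have sub: "\<sigma> ` {1..\<beta>-2} \<subseteq> {1..\<beta>-1}"
  proof
    fix v assume "v \<in> \<sigma> ` {1..\<beta>-2}"
    then obtain i where i: "i \<in> {1..\<beta>-2}" "v = \<sigma> i" by blast
    have "1 \<le> i \<and> i < \<beta> - 1" using i(1) b by auto
    then have "\<sigma> i < \<beta>" using pre by blast
    moreover have "i \<in> {1..N}" using i(1) b by auto
    then have "\<sigma> i \<in> {1..N}" using img by blast
    ultimately show "v \<in> {1..\<beta>-1}" using i(2) by auto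
  qed
  have c1: "card (\<sigma> ` {1..\<beta>-2}) = card {1..\<beta>-2}"
    by (rule card_image[OF inj_on_subset[OF inj subset_UNIV]])
  have c2: "card {1..\<beta>-2} = \<beta> - 2" by simp
  have c3: "card {1..\<beta>-1} = \<beta> - 1" by simp
  have "card D = card {1..\<beta>-1} - card (\<sigma> ` {1..\<beta>-2})"
    unfolding D_def by (rule card_Diff_subset[OF _ sub]) simp
  then have "card D = 1" using c1 c2 c3 b by simp
  then obtain \<alpha> where D: "D = {\<alpha>}" by (rule card_1_singletonE)
  have "\<alpha> \<in> D" using D by simp
  then have a: "1 \<le> \<alpha>" "\<alpha> < \<beta>" "\<alpha> \<notin> \<sigma> ` {1..\<beta>-2}" unfolding D_def using b by auto
  have uniq: "\<sigma> j = \<alpha>" if j: "j \<in> {1..N}" "\<beta> \<le> j" "\<sigma> j < \<beta>" for j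
  proof -
    have "\<sigma> j \<in> {1..N}" using img j(1) by blast
    then have s1: "\<sigma> j \<in> {1..\<beta>-1}" using j(3) by auto
    have s2: "\<sigma> j \<notin> \<sigma> ` {1..\<beta>-2}"
    proof
      assume "\<sigma> j \<in> \<sigma> ` {1..\<beta>-2}"
      then obtain i where i: "i \<in> {1..\<beta>-2}" "\<sigma> j = \<sigma> i" by blast
      then have "j = i" using inj by (meson injD)
      then show False using i(1) j(2) by auto
    qed
    have "\<sigma> j \<in> D" unfolding D_def using s1 s2 by blast
    then show ?thesis using D by blast
  qed
  obtain i\<alpha> where ia: "\<sigma> i\<alpha> = \<alpha>" using permutes_surj[OF perm] by (metis surjD)
  have ia1: "i\<alpha> \<in> {1..N}" using img[of i\<alpha>] ia a b by auto
  have "i\<alpha> \<notin> {1..\<beta>-2}" using a ia by auto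
  moreover have "i\<alpha> \<noteq> \<beta> - 1" using b ia a by auto
  ultimately have "\<beta> \<le> i\<alpha>" using ia1 by auto
  show ?thesis by (rule that[OF a(1,2) ia1 ia \<open>\<beta> \<le> i\<alpha>\<close> uniq])
qed



theorem lemma3p3:
  fixes N :: nat and p q :: real and x y :: "nat \<Rightarrow> int" and \<sigma> :: "nat \<Rightarrow> nat"
  assumes "N \<ge> 2"
    and "p > 0" and "q > 0" and "p + q = 1"
    and "\<And>i j. 1 \<le> i \<Longrightarrow> i \<le> j \<Longrightarrow> j \<le> N \<Longrightarrow> x i \<le> x j"
    and "\<And>i j. 1 \<le> i \<Longrightarrow> i \<le> j \<Longrightarrow> j \<le> N \<Longrightarrow> y i \<le> y j"
    and "\<sigma> permutes {1..N}"
    and "\<exists>\<beta>. 2 \<le> \<beta> \<and> \<beta> \<le> N \<and> \<sigma> (\<beta> - 1) = \<beta> \<and> (\<forall>i. 1 \<le> i \<and> i < \<beta> - 1 \<longrightarrow> \<sigma> i < \<beta>)"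
  shows "\<exists>r0>0. \<forall>r. 0 < r \<and> r < r0 \<longrightarrow> I_sigma p q N x y \<sigma> r = 0"
proof -
  obtain \<beta> where b: "2 \<le> \<beta>" "\<beta> \<le> N" "\<sigma> (\<beta> - 1) = \<beta>"
    and pre: "\<forall>i. 1 \<le> i \<and> i < \<beta> - 1 \<longrightarrow> \<sigma> i < \<beta>"
    using assms(8) by blast
  obtain \<alpha> i\<alpha> where a: "1 \<le> \<alpha>" "\<alpha> < \<beta>" "i\<alpha> \<in> {1..N}" "\<sigma> i\<alpha> = \<alpha>" "\<beta> \<le> i\<alpha>"
    and uniq: "\<And>j. j \<in> {1..N} \<Longrightarrow> \<beta> \<le> j \<Longrightarrow> \<sigma> j < \<beta> \<Longrightarrow> \<sigma> j = \<alpha>"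
    using combi[OF assms(7) b pre] by blast
  have inj: "inj \<sigma>" using permutes_inj[OF assms(7)] .
  have img: "\<And>i. \<sigma> i \<in> {1..N} \<longleftrightarrow> i \<in> {1..N}" using permutes_in_image[OF assms(7)] .
  define P where "P = {(i, j). 1 \<le> i \<and> i < j \<and> j \<le> N \<and> \<sigma> i > \<sigma> j}"
  have imgI: "\<And>i. i \<in> {1..N} \<Longrightarrow> \<sigma> i \<in> {1..N}" using img by blast
  have Pmem: "\<sigma> (fst pr) \<in> {1..N}" "\<sigma> (snd pr) \<in> {1..N}" if "pr \<in> P" for pr
  proof -
    have "fst pr \<in> {1..N}" "snd pr \<in> {1..N}" using that by (auto simp: P_def)
    then show "\<sigma> (fst pr) \<in> {1..N}" "\<sigma> (snd pr) \<in> {1..N}" using imgI by blast+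
  qed
  have finP: "finite P"
    by (rule finite_subset[of _ "{1..N} \<times> {1..N}"]) (auto simp: P_def)
  define e where "e = (\<lambda>i. x i - y (\<sigma> i) - 1)"
  define F where "F = integrand p q N x y \<sigma>"
  have Feq: "F \<xi> = (\<Prod>pr\<in>P. azrp_S p q (\<xi> (\<sigma> (fst pr))) (\<xi> (\<sigma> (snd pr)))) * (\<Prod>i=1..N. \<xi> (\<sigma> i) powi e i)" for \<xi>
    by (simp add: F_def integrand_def A_sigma_def split_def P_def e_def)
  show ?thesis
  proof (intro exI[of _ "p / 5"] conjI allI impI)
    show "p / 5 > 0" using assms(2) by simp
    fix r assume rr: "0 < r \<and> r < p / 5"
    interpret prm p q r using assms(2,3,4) rr by unfold_locales auto
    define js where "js = rev [1..<N+1]"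
    have sjs: "set js = {1..N}" by (auto simp: js_def)
    have "iter_cint r js F (\<lambda>_. 0) = 0"
    proof (rule main_abstract[where \<alpha>=\<alpha> and \<beta>=\<beta>])
      show "r > 0" by (rule r)
      show "distinct js" by (simp add: js_def)
      show "0 \<notin> set js" "\<alpha> \<in> set js" "\<beta> \<in> set js" "\<alpha> \<noteq> \<beta>" using sjs a b by auto
      show "F (\<xi>(0 := v)) = F \<xi>" for \<xi> v
      proof -
        have "(\<Prod>pr\<in>P. azrp_S p q ((\<xi>(0 := v)) (\<sigma> (fst pr))) ((\<xi>(0 := v)) (\<sigma> (snd pr))))
            = (\<Prod>pr\<in>P. azrp_S p q (\<xi> (\<sigma> (fst pr))) (\<xi> (\<sigma> (snd pr))))"
          by (rule prod.cong) (use Pmem in force)+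
        moreover have "(\<Prod>i=1..N. (\<xi>(0 := v)) (\<sigma> i) powi e i) = (\<Prod>i=1..N. \<xi> (\<sigma> i) powi e i)"
          by (rule prod.cong) (use imgI in force)+
        ultimately show ?thesis by (simp only: Feq)
      qed
      show "continuous_on (Tor r (set js)) F"
      proof -
        have "continuous_on (Tor r {1..N}) (\<lambda>\<xi>. (\<Prod>pr\<in>P. azrp_S p q (\<xi> (\<sigma> (fst pr))) (\<xi> (\<sigma> (snd pr)))) * (\<Prod>i=1..N. \<xi> (\<sigma> i) powi e i))"
        proof (intro continuous_on_mult continuous_on_prod)
          show "continuous_on (Tor r {1..N}) (\<lambda>\<xi>. azrp_S p q (\<xi> (\<sigma> (fst pr))) (\<xi> (\<sigma> (snd pr))))" if "pr \<in> P" for pr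
            by (rule cont_S) (use Pmem that in auto)
          show "continuous_on (Tor r {1..N}) (\<lambda>\<xi>. \<xi> (\<sigma> i) powi e i)" if "i \<in> {1..N}" for i
            by (intro continuous_intros cont_coord) (use imgI[OF that] r in \<open>auto simp: Tor_def\<close>)
        qed
        then show ?thesis using sjs Feq by simp
      qed
      fix \<xi> assume \<xi>: "\<xi> \<in> Tor r (set js)"
      define A where "A = \<xi> \<alpha>"
      define B where "B = \<xi> \<beta>"
      have nA: "cmod A = r" and nB: "cmod B = r" using \<xi> a b sjs by (auto simp: Tor_def A_def B_def)
      have nx: "cmod (\<xi> k) = r" if "k \<in> {1..N}" for k using \<xi> sjs that by (auto simp: Tor_def)
      define \<Xi> where "\<Xi> = (\<lambda>w::complex. \<xi>(\<alpha> := (w / r) * A, \<beta> := B / (w / r)))"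
      have Xa: "\<Xi> w \<alpha> = (w / r) * A" and Xb: "\<Xi> w \<beta> = B / (w / r)" for w
        using a by (auto simp: \<Xi>_def)
      have Xo: "\<Xi> w k = \<xi> k" if "k \<noteq> \<alpha>" "k \<noteq> \<beta>" for w k
        using that by (simp add: \<Xi>_def)
      define kA where "kA = (\<lambda>pr::nat\<times>nat. if \<sigma> (snd pr) = \<alpha> then 1 else (0::int))"
      define kM where "kM = (\<lambda>i. if \<sigma> i = \<alpha> then e i else if \<sigma> i = \<beta> then - e i else 0)"
      have gA: "good r (\<Sum>pr\<in>P. kA pr) (\<lambda>w. \<Prod>pr\<in>P. azrp_S p q (\<Xi> w (\<sigma> (fst pr))) (\<Xi> w (\<sigma> (snd pr))))"
      proof (rule good_prod[OF r finP])
        fix pr assume pr: "pr \<in> P"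
        obtain i j where ij: "pr = (i, j)" by (cases pr)
        have ij': "1 \<le> i" "i < j" "j \<le> N" "\<sigma> j < \<sigma> i" using pr ij by (auto simp: P_def)
        have sij: "\<sigma> i \<in> {1..N}" "\<sigma> j \<in> {1..N}" using Pmem[OF pr] ij by auto
        show "good r (kA pr) (\<lambda>w. azrp_S p q (\<Xi> w (\<sigma> (fst pr))) (\<Xi> w (\<sigma> (snd pr))))"
        proof (cases "\<sigma> j = \<alpha>")
          case True
          show ?thesis
          proof (cases "\<sigma> i = \<beta>")
            case True2: True
            have k: "kA pr = 1" by (simp add: kA_def ij True)
            show ?thesis unfolding k
              by (rule good_cong[OF g1[OF nA nB]]) (simp add: ij True True2 Xa Xb)
          next
            case False
            have "\<sigma> i \<noteq> \<alpha>" using ij' True by auto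
            have k: "kA pr = 1" by (simp add: kA_def ij True)
            show ?thesis unfolding k
              by (rule good_cong[OF g2[OF nA nx[OF sij(1)]]]) (simp add: ij True False \<open>\<sigma> i \<noteq> \<alpha>\<close> Xa Xo)
          qed
        next
          case False
          have n1: "\<sigma> j \<noteq> \<beta>"
          proof
            assume h: "\<sigma> j = \<beta>"
            then have "j = \<beta> - 1" using b(3) inj by (metis injD)
            then have "\<sigma> i < \<beta>" using pre ij' by auto
            then show False using h ij' by simp
          qed
          have n2: "\<sigma> i \<noteq> \<beta>"
          proof
            assume h: "\<sigma> i = \<beta>"
            then have "i = \<beta> - 1" using b(3) inj by (metis injD)
            then have "\<sigma> j = \<alpha>" using uniq[of j] ij' h by auto
            then show False using False by simp
          qed
          have n3: "\<sigma> i \<noteq> \<alpha>"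
          proof
            assume h: "\<sigma> i = \<alpha>"
            then have "i = i\<alpha>" using a(4) inj by (metis injD)
            then have "\<sigma> j = \<alpha>" using uniq[of j] ij' h a by auto
            then show False using False by simp
          qed
          have k: "kA pr = 0" by (simp add: kA_def ij False)
          show ?thesis unfolding k
            by (rule good_cong[OF good_const]) (simp add: ij False n1 n2 n3 Xo)
        qed
      qed
      have gM: "good r (\<Sum>i\<in>{1..N}. kM i) (\<lambda>w. \<Prod>i\<in>{1..N}. \<Xi> w (\<sigma> i) powi e i)"
      proof (rule good_prod[OF r finite_atLeastAtMost])
        fix i assume i: "i \<in> {1..N}"
        show "good r (kM i) (\<lambda>w. \<Xi> w (\<sigma> i) powi e i)"
        proof (cases "\<sigma> i = \<alpha>")
          case True
          have k: "kM i = e i" by (simp add: kM_def True)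
          show ?thesis unfolding k by (rule good_cong[OF g3]) (simp add: Xa True)
        next
          case False
          show ?thesis
          proof (cases "\<sigma> i = \<beta>")
            case True
            have k: "kM i = - e i" using False True by (simp add: kM_def)
            show ?thesis unfolding k by (rule good_cong[OF g4]) (simp add: Xb True)
          next
            case False2: False
            have k: "kM i = 0" by (simp add: kM_def False2 False)
            show ?thesis unfolding k
              by (rule good_cong[OF good_const]) (simp add: Xo False False2)
          qed
        qed
      qed
      have sA: "(\<Sum>pr\<in>P. kA pr) \<ge> 1"
      proof -
        have m: "(\<beta> - 1, i\<alpha>) \<in> P" using a b by (auto simp: P_def)
        have "kA (\<beta> - 1, i\<alpha>) \<le> (\<Sum>pr\<in>P. kA pr)"
          by (rule member_le_sum[OF m _ finP]) (simp add: kA_def)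
        then show ?thesis using a by (simp add: kA_def)
      qed
      have sM: "(\<Sum>i\<in>{1..N}. kM i) \<ge> 0"
      proof -
        have ne: "i\<alpha> \<noteq> \<beta> - 1" using a b by auto
        have kMe: "\<forall>i\<in>{1..N}. kM i = (if i = i\<alpha> then e i else 0) - (if i = \<beta> - 1 then e i else 0)"
        proof
          fix i assume "i \<in> {1..N}"
          have "\<sigma> i = \<alpha> \<longleftrightarrow> i = i\<alpha>" using a(4) inj by (metis injD)
          moreover have "\<sigma> i = \<beta> \<longleftrightarrow> i = \<beta> - 1" using b(3) inj by (metis injD)
          ultimately show "kM i = (if i = i\<alpha> then e i else 0) - (if i = \<beta> - 1 then e i else 0)"
            using ne a b by (auto simp: kM_def)
        qed
        then have "(\<Sum>i\<in>{1..N}. kM i) = (\<Sum>i\<in>{1..N}. (if i = i\<alpha> then e i else 0) - (if i = \<beta> - 1 then e i else 0))"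
          by (intro sum.cong refl) (use kMe in blast)
        also have "\<dots> = e i\<alpha> - e (\<beta> - 1)"
        proof -
          have m: "\<beta> - 1 \<in> {1..N}" using b by auto
          show ?thesis using a(3) m by (simp only: sum_subtractf sum.delta finite_atLeastAtMost if_True)
        qed
        also have "\<dots> \<ge> 0"
        proof -
          have "x (\<beta> - 1) \<le> x i\<alpha>" using assms(5)[of "\<beta> - 1" i\<alpha>] a b by auto
          moreover have "y \<alpha> \<le> y \<beta>" using assms(6)[of \<alpha> \<beta>] a b by auto
          ultimately show ?thesis using a b by (simp add: e_def)
        qed
        finally show ?thesis .
      qed
      have "good r ((\<Sum>pr\<in>P. kA pr) + (\<Sum>i\<in>{1..N}. kM i))
          (\<lambda>w. (\<Prod>pr\<in>P. azrp_S p q (\<Xi> w (\<sigma> (fst pr))) (\<Xi> w (\<sigma> (snd pr)))) * (\<Prod>i\<in>{1..N}. \<Xi> w (\<sigma> i) powi e i))"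
        by (rule good_mult[OF r gA gM])
      then have "good r 1 (\<lambda>w. (\<Prod>pr\<in>P. azrp_S p q (\<Xi> w (\<sigma> (fst pr))) (\<Xi> w (\<sigma> (snd pr)))) * (\<Prod>i\<in>{1..N}. \<Xi> w (\<sigma> i) powi e i))"
        by (rule good_mono) (use sA sM r in auto)
      then have "good r 1 (\<lambda>w. F (\<xi>(\<alpha> := (w / r) * \<xi> \<alpha>, \<beta> := \<xi> \<beta> / (w / r))))"
        by (rule good_cong) (simp add: Feq \<Xi>_def A_def B_def)
      then show "contour_integral (circlepath 0 r) (\<lambda>w. F (\<xi>(\<alpha> := (w / r) * \<xi> \<alpha>, \<beta> := \<xi> \<beta> / (w / r))) / w) = 0"
        by (rule good_final[OF r])
    qed
    then show "I_sigma p q N x y \<sigma> r = 0" by (simp add: I_sigma_def F_def js_def)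
  qed
qed


end
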